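(* Let $\mathcal F$ be a finite set of edge-colored graphs (edge colors $[r]$) such that for every color $i\in[r]$ there exists an $\mathcal F$-safe colored $i$-determiner. Then for every $d\in\mathbb N$ and every $i\in[r]$ there exists an $\mathcal F$-safe $d$-remote colored $i$-determiner.
   Context: Graphs are finite simple undirected. An edge-colored graph is $(G,\gamma)$, $\gamma\colon E(G)\to[r]$. $(G,\gamma)$ is $\mathcal F$-free if there is no $(F,\phi)\in\mathcal F$ and graph homomorphism $h\colon F\to G$ with $\gamma(h(e))=\phi(e)$ for all $e\in E(F)$. A partially edge-colored graph is $(G,\xi)$ with $\xi\colon S\to[r]$, $S=\mathrm{dom}(\xi)\subseteq E(G)$; an extension of $\xi$ is $\gamma\colon E(G)\to[r]$ with $\gamma|_S=\xi$. Gluing: for graphs $G,H$ with pairwise disjoint edges $e_1,\dots,e_k\in E(G)$, $f_1,\dots,f_k\in E(H)$, $G\oplus H$ is obtained from the disjoint union by identifying $e_j$ with $f_j$ for each $j$ (identifying endpoints in some way). $(G,\xi)$ with pairwise disjoint edges $e_1,\dots,e_k\notin\mathrm{dom}(\xi)$ is $\mathcal F$-safe along $e_1,\dots,e_k$ if (a) $\xi$ has an $\mathcal F$-free extension, and (b) for every $\mathcal F$-free $(H,\gamma_H)$ and pairwise disjoint $f_1,\dots,f_k\in E(H)$ such that some $\mathcal F$-free extension $\gamma$ of $\xi$ satisfies $\gamma(e_j)=\gamma_H(f_j)$ for all $j$, and every way of forming $G\oplus H$, the partial coloring $\xi\cup\gamma_H$ of $G\oplus H$ has an $\mathcal F$-free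 extension. $\mathrm{dist}(e,e')$ is the minimum shortest-path distance between an endpoint of $e$ and one of $e'$; $\mathrm{dist}(e,S)=\min_{e'\in S}\mathrm{dist}(e,e')$. A colored $i$-determiner is $(G,\xi,e)$ with $e\in E(G)\setminus\mathrm{dom}(\xi)$ such that (1) one endpoint of $e$ is incident to no edge of $\mathrm{dom}(\xi)$, (2) $\xi$ has an $\mathcal F$-free extension, (3) every $\mathcal F$-free extension $\gamma$ of $\xi$ has $\gamma(e)=i$. It is $d$-remote if $\mathrm{dist}(e,\mathrm{dom}(\xi))\ge d$, and $\mathcal F$-safe if $(G,\xi)$ is $\mathcal F$-safe along $e$. *)

theory Defs
  imports Main
begin

definition graph :: "'v set \<Rightarrow> 'v set set \<Rightarrow> bool" where
  "graph V E \<longleftrightarrow> finite V \<and> (\<forall>e\<in>E. e \<subseteq> V \<and> card e = 2)"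

definition coloring :: "nat \<Rightarrow> 'v set set \<Rightarrow> ('v set \<Rightarrow> nat) \<Rightarrow> bool" where
  "coloring r E \<gamma> \<longleftrightarrow> (\<forall>e\<in>E. \<gamma> e \<in> {1..r})"

definition pcoloring :: "nat \<Rightarrow> 'v set set \<Rightarrow> ('v set \<rightharpoonup> nat) \<Rightarrow> bool" where
  "pcoloring r E \<xi> \<longleftrightarrow> dom \<xi> \<subseteq> E \<and> ran \<xi> \<subseteq> {1..r}"

definition extension :: "nat \<Rightarrow> 'v set set \<Rightarrow> ('v set \<rightharpoonup> nat) \<Rightarrow> ('v set \<Rightarrow> nat) \<Rightarrow> bool" where
  "extension r E \<xi> \<gamma> \<longleftrightarrow> coloring r E \<gamma> \<and> (\<forall>e\<in>dom \<xi>. \<xi> e = Some (\<gamma> e))"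

definition col_hom :: "'a set \<Rightarrow> 'a set set \<Rightarrow> ('a set \<Rightarrow> nat) \<Rightarrow> 'v set \<Rightarrow> 'v set set \<Rightarrow> ('v set \<Rightarrow> nat) \<Rightarrow> ('a \<Rightarrow> 'v) \<Rightarrow> bool" where
  "col_hom VF EF \<phi> V E \<gamma> h \<longleftrightarrow> h ` VF \<subseteq> V \<and> (\<forall>e\<in>EF. h ` e \<in> E \<and> \<gamma> (h ` e) = \<phi> e)"

definition Ffree :: "('a set \<times> 'a set set \<times> ('a set \<Rightarrow> nat)) set \<Rightarrow> 'v set \<Rightarrow> 'v set set \<Rightarrow> ('v set \<Rightarrow> nat) \<Rightarrow> bool" where
  "Ffree \<F> V E \<gamma> \<longleftrightarrow> \<not> (\<exists>(VF, EF, \<phi>)\<in>\<F>. \<exists>h. col_hom VF EF \<phi> V E \<gamma> h)"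

definition pairwise_disj_list :: "'v set list \<Rightarrow> bool" where
  "pairwise_disj_list es \<longleftrightarrow> (\<forall>i<length es. \<forall>j<length es. i \<noteq> j \<longrightarrow> es ! i \<inter> es ! j = {})"

text \<open>(VK,EK) is a way of forming G (+) H, gluing edge es!j of G to fs!j of H:
  g and h are the (injective) embeddings of G and H into K, K is the union of the images,
  the images intersect exactly in the identified edges, and es!j is identified with fs!j.\<close>
definition glued :: "'v set \<Rightarrow> 'v set set \<Rightarrow> 'w set \<Rightarrow> 'w set set \<Rightarrow> 'v set list \<Rightarrow> 'w set list
    \<Rightarrow> 'u set \<Rightarrow> 'u set set \<Rightarrow> ('v \<Rightarrow> 'u) \<Rightarrow> ('w \<Rightarrow> 'u) \<Rightarrow> bool" where
  "glued V E VH EH es fs VK EK g h \<longleftrightarrow>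
     inj_on g V \<and> inj_on h VH \<and>
     VK = g ` V \<union> h ` VH \<and>
     EK = (\<lambda>e. g ` e) ` E \<union> (\<lambda>f. h ` f) ` EH \<and>
     g ` V \<inter> h ` VH = (\<Union>j<length es. g ` (es ! j)) \<and>
     (\<forall>j<length es. g ` (es ! j) = h ` (fs ! j))"

text \<open>(G,xi) is F-safe along the edges es. All graphs H and glued graphs K range over
  finite graphs with vertices in nat (every finite graph is isomorphic to such a graph).\<close>
definition safe :: "nat \<Rightarrow> ('a set \<times> 'a set set \<times> ('a set \<Rightarrow> nat)) set \<Rightarrow> nat set \<Rightarrow> nat set set
    \<Rightarrow> (nat set \<rightharpoonup> nat) \<Rightarrow> nat set list \<Rightarrow> bool" where
  "safe r \<F> V E \<xi> es \<longleftrightarrow>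
     set es \<subseteq> E \<and> set es \<inter> dom \<xi> = {} \<and> distinct es \<and> pairwise_disj_list es \<and>
     (\<exists>\<gamma>. extension r E \<xi> \<gamma> \<and> Ffree \<F> V E \<gamma>) \<and>
     (\<forall>(VH::nat set) EH \<gamma>H fs.
        graph VH EH \<and> coloring r EH \<gamma>H \<and> Ffree \<F> VH EH \<gamma>H \<and>
        length fs = length es \<and> set fs \<subseteq> EH \<and> distinct fs \<and> pairwise_disj_list fs \<and>
        (\<exists>\<gamma>. extension r E \<xi> \<gamma> \<and> Ffree \<F> V E \<gamma> \<and>
              (\<forall>j<length es. \<gamma> (es ! j) = \<gamma>H (fs ! j)))
        \<longrightarrow> (\<forall>(VK::nat set) EK g h. glued V E VH EH es fs VK EK g h \<longrightarrow>
               (\<exists>\<gamma>K. coloring r EK \<gamma>K \<and> Ffree \<F> VK EK \<gamma>K \<and>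
                     (\<forall>e\<in>dom \<xi>. \<xi> e = Some (\<gamma>K (g ` e))) \<and>
                     (\<forall>f\<in>EH. \<gamma>K (h ` f) = \<gamma>H f))))"

definition walk_len :: "'v set set \<Rightarrow> 'v \<Rightarrow> 'v \<Rightarrow> nat \<Rightarrow> bool" where
  "walk_len E u v n \<longleftrightarrow> (\<exists>p. length p = Suc n \<and> p ! 0 = u \<and> p ! n = v \<and>
                               (\<forall>i<n. {p ! i, p ! Suc i} \<in> E))"

text \<open>dist(e, S) >= d (with the minimum over an empty set / disconnected pairs being infinite).\<close>
definition remote :: "nat \<Rightarrow> 'v set set \<Rightarrow> 'v set \<Rightarrow> 'v set set \<Rightarrow> bool" where
  "remote d E e S \<longleftrightarrow> (\<forall>e'\<in>S. \<forall>u\<in>e. \<forall>v\<in>e'. \<forall>n<d. \<not> walk_len E u v n)"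

definition determiner :: "nat \<Rightarrow> ('a set \<times> 'a set set \<times> ('a set \<Rightarrow> nat)) set \<Rightarrow> 'v set \<Rightarrow> 'v set set
    \<Rightarrow> ('v set \<rightharpoonup> nat) \<Rightarrow> 'v set \<Rightarrow> nat \<Rightarrow> bool" where
  "determiner r \<F> V E \<xi> e i \<longleftrightarrow>
     graph V E \<and> pcoloring r E \<xi> \<and> e \<in> E \<and> e \<notin> dom \<xi> \<and>
     (\<exists>x\<in>e. \<forall>e'\<in>dom \<xi>. x \<notin> e') \<and>
     (\<exists>\<gamma>. extension r E \<xi> \<gamma> \<and> Ffree \<F> V E \<gamma>) \<and>
     (\<forall>\<gamma>. extension r E \<xi> \<gamma> \<and> Ffree \<F> V E \<gamma> \<longrightarrow> \<gamma> e = i)"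

end

theory Submission
  imports Defs
begin


definition lip :: "nat set set \<Rightarrow> (nat \<Rightarrow> nat) \<Rightarrow> bool" where
  "lip E \<phi> \<longleftrightarrow> (\<forall>e\<in>E. \<forall>u\<in>e. \<forall>v\<in>e. \<phi> u \<le> \<phi> v + 1)"

lemma lipD: "lip E \<phi> \<Longrightarrow> e \<in> E \<Longrightarrow> u \<in> e \<Longrightarrow> v \<in> e \<Longrightarrow> \<phi> u \<le> \<phi> v + 1"
  unfolding lip_def by blast

lemma lip_walk:
  assumes "lip E \<phi>" "walk_len E u v n"
  shows "\<phi> v \<le> \<phi> u + n"
proof -
  obtain p where p0: "length p = Suc n \<and> p ! 0 = u \<and> p ! n = v \<and> (\<forall>i<n. {p ! i, p ! Suc i} \<in> E)"
    using assms(2) unfolding walk_len_def by (rule exE)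
  note p = conjunct1[OF p0] conjunct1[OF conjunct2[OF p0]] conjunct1[OF conjunct2[OF conjunct2[OF p0]]]
     conjunct2[OF conjunct2[OF conjunct2[OF p0]]]
  have step: "\<phi> (p ! Suc i) \<le> \<phi> (p ! i) + 1" if "i < n" for i
  proof -
    have "{p ! i, p ! Suc i} \<in> E" using p(4) that by blast
    then show ?thesis by (rule lipD[OF assms(1)]) auto
  qed
  have "\<phi> (p ! i) \<le> \<phi> u + i" if "i \<le> n" for i
    using that
  proof (induction i)
    case 0 then show ?case using p(2) by simp
  next
    case (Suc i)
    have "\<phi> (p ! Suc i) \<le> \<phi> (p ! i) + 1" using step Suc.prems by simp
    moreover have "\<phi> (p ! i) \<le> \<phi> u + i" using Suc by simp
    ultimately show ?case by simp
  qed
  from this[of n] show ?thesis using p(3) by simp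
qed

lemma lip_remote:
  assumes "lip E \<phi>" "\<forall>x\<in>e. \<phi> x = 0" "\<forall>e'\<in>S. \<forall>x\<in>e'. d \<le> \<phi> x"
  shows "remote d E e S"
  unfolding remote_def
proof (intro ballI allI impI notI)
  fix e' u v n assume "e' \<in> S" "u \<in> e" "v \<in> e'" "n < d" "walk_len E u v n"
  then have "\<phi> v \<le> \<phi> u + n" using lip_walk assms(1) by blast
  moreover have "\<phi> u = 0" using assms(2) \<open>u \<in> e\<close> by blast
  moreover have "d \<le> \<phi> v" using assms(3) \<open>e' \<in> S\<close> \<open>v \<in> e'\<close> by blast
  ultimately show False using \<open>n < d\<close> by simp
qed

lemma col_hom_mono:
  assumes "col_hom VF EF \<phi> V E \<gamma> h" "V \<subseteq> V'" "E \<subseteq> E'"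
  shows "col_hom VF EF \<phi> V' E' \<gamma> h"
  using assms unfolding col_hom_def by (meson subset_iff order_trans)

lemma Ffree_sub:
  assumes "Ffree F V' E' \<gamma>" "V \<subseteq> V'" "E \<subseteq> E'"
  shows "Ffree F V E \<gamma>"
  unfolding Ffree_def
proof
  assume "\<exists>(VF, EF, \<phi>)\<in>F. \<exists>h. col_hom VF EF \<phi> V E \<gamma> h"
  then obtain VF EF \<phi> h where "(VF, EF, \<phi>) \<in> F" "col_hom VF EF \<phi> V E \<gamma> h" by blast
  then have "col_hom VF EF \<phi> V' E' \<gamma> h" using col_hom_mono assms(2,3) by blast
  then show False using assms(1) \<open>(VF, EF, \<phi>) \<in> F\<close> unfolding Ffree_def by blast
qed

lemma col_hom_comp:
  assumes "col_hom VF EF \<phi> V E (\<lambda>e. \<gamma> (g ` e)) h" "g ` V \<subseteq> V'" "\<forall>e\<in>E. g ` e \<in> E'"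
  shows "col_hom VF EF \<phi> V' E' \<gamma> (g \<circ> h)"
  unfolding col_hom_def
proof (intro conjI ballI)
  have "h ` VF \<subseteq> V" using assms(1) unfolding col_hom_def by blast
  then show "(g \<circ> h) ` VF \<subseteq> V'" using assms(2) by (metis image_comp image_mono subset_trans)
next
  fix e assume "e \<in> EF"
  then have "h ` e \<in> E" "\<gamma> (g ` (h ` e)) = \<phi> e" using assms(1) unfolding col_hom_def by auto
  then show "(g \<circ> h) ` e \<in> E'" "\<gamma> ((g \<circ> h) ` e) = \<phi> e" using assms(3) by (auto simp: image_comp)
qed

lemma Ffree_img:
  assumes "Ffree F V' E' \<gamma>" "g ` V \<subseteq> V'" "\<forall>e\<in>E. g ` e \<in> E'"
  shows "Ffree F V E (\<lambda>e. \<gamma> (g ` e))"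
  unfolding Ffree_def
proof
  assume "\<exists>(VF, EF, \<phi>)\<in>F. \<exists>h. col_hom VF EF \<phi> V E (\<lambda>e. \<gamma> (g ` e)) h"
  then obtain VF EF \<phi> h where "(VF, EF, \<phi>) \<in> F" "col_hom VF EF \<phi> V E (\<lambda>e. \<gamma> (g ` e)) h" by blast
  then have "col_hom VF EF \<phi> V' E' \<gamma> (g \<circ> h)" using col_hom_comp assms(2,3) by blast
  then show False using assms(1) \<open>(VF, EF, \<phi>) \<in> F\<close> unfolding Ffree_def by blast
qed

lemma safe1_iff:
  "safe r F V E \<xi> [e] \<longleftrightarrow>
     e \<in> E \<and> e \<notin> dom \<xi> \<and>
     (\<exists>\<gamma>. extension r E \<xi> \<gamma> \<and> Ffree F V E \<gamma>) \<and>
     (\<forall>(VH::nat set) EH \<gamma>H fH.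
        graph VH EH \<and> coloring r EH \<gamma>H \<and> Ffree F VH EH \<gamma>H \<and> fH \<in> EH \<and>
        (\<exists>\<gamma>. extension r E \<xi> \<gamma> \<and> Ffree F V E \<gamma> \<and> \<gamma> e = \<gamma>H fH)
        \<longrightarrow> (\<forall>(VK::nat set) EK g h.
               inj_on g V \<and> inj_on h VH \<and> VK = g ` V \<union> h ` VH \<and>
               EK = (\<lambda>e. g ` e) ` E \<union> (\<lambda>f. h ` f) ` EH \<and>
               g ` V \<inter> h ` VH = g ` e \<and> g ` e = h ` fH \<longrightarrow>
               (\<exists>\<gamma>K. coloring r EK \<gamma>K \<and> Ffree F VK EK \<gamma>K \<and>
                     (\<forall>e\<in>dom \<xi>. \<xi> e = Some (\<gamma>K (g ` e))) \<and>
                     (\<forall>f\<in>EH. \<gamma>K (h ` f) = \<gamma>H f))))"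
  (is "?L \<longleftrightarrow> ?R")
proof
  assume L: ?L
  show ?R
  proof (intro conjI allI impI)
    show "e \<in> E" "e \<notin> dom \<xi>" "\<exists>\<gamma>. extension r E \<xi> \<gamma> \<and> Ffree F V E \<gamma>"
      using L unfolding safe_def by auto
  next
    fix VH :: "nat set" and EH and \<gamma>H and fH and VK :: "nat set" and EK and g and h
    assume H: "graph VH EH \<and> coloring r EH \<gamma>H \<and> Ffree F VH EH \<gamma>H \<and> fH \<in> EH \<and>
        (\<exists>\<gamma>. extension r E \<xi> \<gamma> \<and> Ffree F V E \<gamma> \<and> \<gamma> e = \<gamma>H fH)"
    and K: "inj_on g V \<and> inj_on h VH \<and> VK = g ` V \<union> h ` VH \<and>
               EK = (\<lambda>e. g ` e) ` E \<union> (\<lambda>f. h ` f) ` EH \<and>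
               g ` V \<inter> h ` VH = g ` e \<and> g ` e = h ` fH"
    have "glued V E VH EH [e] [fH] VK EK g h" using K unfolding glued_def by auto
    have "pairwise_disj_list [fH]" unfolding pairwise_disj_list_def by auto
    show "\<exists>\<gamma>K. coloring r EK \<gamma>K \<and> Ffree F VK EK \<gamma>K \<and>
                     (\<forall>e\<in>dom \<xi>. \<xi> e = Some (\<gamma>K (g ` e))) \<and>
                     (\<forall>f\<in>EH. \<gamma>K (h ` f) = \<gamma>H f)"
    proof -
      have main: "\<forall>(VH::nat set) EH \<gamma>H fs.
        graph VH EH \<and> coloring r EH \<gamma>H \<and> Ffree F VH EH \<gamma>H \<and>
        length fs = length [e] \<and> set fs \<subseteq> EH \<and> distinct fs \<and> pairwise_disj_list fs \<and>
        (\<exists>\<gamma>. extension r E \<xi> \<gamma> \<and> Ffree F V E \<gamma> \<and>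
              (\<forall>j<length [e]. \<gamma> ([e] ! j) = \<gamma>H (fs ! j)))
        \<longrightarrow> (\<forall>(VK::nat set) EK g h. glued V E VH EH [e] fs VK EK g h \<longrightarrow>
               (\<exists>\<gamma>K. coloring r EK \<gamma>K \<and> Ffree F VK EK \<gamma>K \<and>
                     (\<forall>e\<in>dom \<xi>. \<xi> e = Some (\<gamma>K (g ` e))) \<and>
                     (\<forall>f\<in>EH. \<gamma>K (h ` f) = \<gamma>H f)))"
        using L unfolding safe_def by blast
      have pre: "graph VH EH \<and> coloring r EH \<gamma>H \<and> Ffree F VH EH \<gamma>H \<and>
        length [fH] = length [e] \<and> set [fH] \<subseteq> EH \<and> distinct [fH] \<and> pairwise_disj_list [fH] \<and>
        (\<exists>\<gamma>. extension r E \<xi> \<gamma> \<and> Ffree F V E \<gamma> \<and>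
              (\<forall>j<length [e]. \<gamma> ([e] ! j) = \<gamma>H ([fH] ! j)))"
        using H \<open>pairwise_disj_list [fH]\<close> by auto
      show ?thesis using main[rule_format, OF pre] \<open>glued V E VH EH [e] [fH] VK EK g h\<close> by blast
    qed
  qed
next
  assume R: ?R
  show ?L unfolding safe_def
  proof (intro conjI allI impI)
    show "set [e] \<subseteq> E" "set [e] \<inter> dom \<xi> = {}" "distinct [e]" "pairwise_disj_list [e]"
      "\<exists>\<gamma>. extension r E \<xi> \<gamma> \<and> Ffree F V E \<gamma>"
      using R unfolding pairwise_disj_list_def by auto
  next
    fix VH :: "nat set" and EH and \<gamma>H and fs
    assume H: "graph VH EH \<and> coloring r EH \<gamma>H \<and> Ffree F VH EH \<gamma>H \<and>
        length fs = length [e] \<and> set fs \<subseteq> EH \<and> distinct fs \<and> pairwise_disj_list fs \<and>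
        (\<exists>\<gamma>. extension r E \<xi> \<gamma> \<and> Ffree F V E \<gamma> \<and>
              (\<forall>j<length [e]. \<gamma> ([e] ! j) = \<gamma>H (fs ! j)))"
    then obtain fH where fs: "fs = [fH]" by (auto simp: length_Suc_conv)
    fix VK :: "nat set" and EK and g and h
      assume gl: "glued V E VH EH [e] fs VK EK g h"
      have main: "\<forall>(VH::nat set) EH \<gamma>H fH.
        graph VH EH \<and> coloring r EH \<gamma>H \<and> Ffree F VH EH \<gamma>H \<and> fH \<in> EH \<and>
        (\<exists>\<gamma>. extension r E \<xi> \<gamma> \<and> Ffree F V E \<gamma> \<and> \<gamma> e = \<gamma>H fH)
        \<longrightarrow> (\<forall>(VK::nat set) EK g h.
               inj_on g V \<and> inj_on h VH \<and> VK = g ` V \<union> h ` VH \<and>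
               EK = (\<lambda>e. g ` e) ` E \<union> (\<lambda>f. h ` f) ` EH \<and>
               g ` V \<inter> h ` VH = g ` e \<and> g ` e = h ` fH \<longrightarrow>
               (\<exists>\<gamma>K. coloring r EK \<gamma>K \<and> Ffree F VK EK \<gamma>K \<and>
                     (\<forall>e\<in>dom \<xi>. \<xi> e = Some (\<gamma>K (g ` e))) \<and>
                     (\<forall>f\<in>EH. \<gamma>K (h ` f) = \<gamma>H f)))" using R by blast
      have pre: "graph VH EH \<and> coloring r EH \<gamma>H \<and> Ffree F VH EH \<gamma>H \<and> fH \<in> EH \<and>
        (\<exists>\<gamma>. extension r E \<xi> \<gamma> \<and> Ffree F V E \<gamma> \<and> \<gamma> e = \<gamma>H fH)"
        using H unfolding fs by auto
      have pre2: "inj_on g V \<and> inj_on h VH \<and> VK = g ` V \<union> h ` VH \<and>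
               EK = (\<lambda>e. g ` e) ` E \<union> (\<lambda>f. h ` f) ` EH \<and>
               g ` V \<inter> h ` VH = g ` e \<and> g ` e = h ` fH"
        using gl unfolding fs glued_def by auto
      show "\<exists>\<gamma>K. coloring r EK \<gamma>K \<and> Ffree F VK EK \<gamma>K \<and>
                     (\<forall>e\<in>dom \<xi>. \<xi> e = Some (\<gamma>K (g ` e))) \<and>
                     (\<forall>f\<in>EH. \<gamma>K (h ` f) = \<gamma>H f)"
        using main[rule_format, OF pre pre2] .
  qed
qed

lemma safe1D:
  fixes VH :: "nat set" and g h :: "nat \<Rightarrow> nat"
  assumes "safe r F V E \<xi> [e]" "graph VH EH" "coloring r EH \<gamma>H" "Ffree F VH EH \<gamma>H" "fH \<in> EH"
    "extension r E \<xi> \<gamma>" "Ffree F V E \<gamma>" "\<gamma> e = \<gamma>H fH"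
    "inj_on g V" "inj_on h VH" "g ` V \<inter> h ` VH = g ` e" "g ` e = h ` fH"
  shows "\<exists>\<gamma>K. coloring r ((\<lambda>e. g ` e) ` E \<union> (\<lambda>f. h ` f) ` EH) \<gamma>K \<and>
     Ffree F (g ` V \<union> h ` VH) ((\<lambda>e. g ` e) ` E \<union> (\<lambda>f. h ` f) ` EH) \<gamma>K \<and>
     (\<forall>e\<in>dom \<xi>. \<xi> e = Some (\<gamma>K (g ` e))) \<and> (\<forall>f\<in>EH. \<gamma>K (h ` f) = \<gamma>H f)"
proof -
  have pre: "graph VH EH \<and> coloring r EH \<gamma>H \<and> Ffree F VH EH \<gamma>H \<and> fH \<in> EH \<and>
        (\<exists>\<gamma>. extension r E \<xi> \<gamma> \<and> Ffree F V E \<gamma> \<and> \<gamma> e = \<gamma>H fH)" using assms by blast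
  have pre2: "inj_on g V \<and> inj_on h VH \<and> g ` V \<union> h ` VH = g ` V \<union> h ` VH \<and>
               (\<lambda>e. g ` e) ` E \<union> (\<lambda>f. h ` f) ` EH = (\<lambda>e. g ` e) ` E \<union> (\<lambda>f. h ` f) ` EH \<and>
               g ` V \<inter> h ` VH = g ` e \<and> g ` e = h ` fH" using assms by blast
  note M = assms(1)[unfolded safe1_iff, THEN conjunct2, THEN conjunct2, THEN conjunct2]
  show ?thesis using M[rule_format, OF pre pre2] .
qed

lemma safe1I:
  assumes "e \<in> E" "e \<notin> dom \<xi>" "\<exists>\<gamma>. extension r E \<xi> \<gamma> \<and> Ffree F V E \<gamma>"
  and main: "\<And>(VH :: nat set) EH \<gamma>H fH \<gamma> (g :: nat \<Rightarrow> nat) (h :: nat \<Rightarrow> nat).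
    graph VH EH \<Longrightarrow> coloring r EH \<gamma>H \<Longrightarrow> Ffree F VH EH \<gamma>H \<Longrightarrow> fH \<in> EH \<Longrightarrow>
    extension r E \<xi> \<gamma> \<Longrightarrow> Ffree F V E \<gamma> \<Longrightarrow> \<gamma> e = \<gamma>H fH \<Longrightarrow>
    inj_on g V \<Longrightarrow> inj_on h VH \<Longrightarrow> g ` V \<inter> h ` VH = g ` e \<Longrightarrow> g ` e = h ` fH \<Longrightarrow>
    \<exists>\<gamma>K. coloring r ((\<lambda>e. g ` e) ` E \<union> (\<lambda>f. h ` f) ` EH) \<gamma>K \<and>
     Ffree F (g ` V \<union> h ` VH) ((\<lambda>e. g ` e) ` E \<union> (\<lambda>f. h ` f) ` EH) \<gamma>K \<and>
     (\<forall>e\<in>dom \<xi>. \<xi> e = Some (\<gamma>K (g ` e))) \<and> (\<forall>f\<in>EH. \<gamma>K (h ` f) = \<gamma>H f)"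
  shows "safe r F V E \<xi> [e]"
  unfolding safe1_iff
proof (intro conjI allI impI assms(1-3))
  fix VH :: "nat set" and EH and \<gamma>H and fH and VK :: "nat set" and EK and g and h
  assume H: "graph VH EH \<and> coloring r EH \<gamma>H \<and> Ffree F VH EH \<gamma>H \<and> fH \<in> EH \<and>
        (\<exists>\<gamma>. extension r E \<xi> \<gamma> \<and> Ffree F V E \<gamma> \<and> \<gamma> e = \<gamma>H fH)"
   and K: "inj_on g V \<and> inj_on h VH \<and> VK = g ` V \<union> h ` VH \<and>
               EK = (\<lambda>e. g ` e) ` E \<union> (\<lambda>f. h ` f) ` EH \<and>
               g ` V \<inter> h ` VH = g ` e \<and> g ` e = h ` fH"
  from H obtain \<gamma> where ga: "extension r E \<xi> \<gamma>" "Ffree F V E \<gamma>" "\<gamma> e = \<gamma>H fH" by blast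
  have VK: "VK = g ` V \<union> h ` VH" and EK: "EK = (\<lambda>e. g ` e) ` E \<union> (\<lambda>f. h ` f) ` EH"
    using K by simp_all
  have X: "\<exists>\<gamma>K. coloring r ((\<lambda>e. g ` e) ` E \<union> (\<lambda>f. h ` f) ` EH) \<gamma>K \<and>
     Ffree F (g ` V \<union> h ` VH) ((\<lambda>e. g ` e) ` E \<union> (\<lambda>f. h ` f) ` EH) \<gamma>K \<and>
     (\<forall>e\<in>dom \<xi>. \<xi> e = Some (\<gamma>K (g ` e))) \<and> (\<forall>f\<in>EH. \<gamma>K (h ` f) = \<gamma>H f)"
    apply (rule main[of VH EH \<gamma>H fH \<gamma> g h])
    using H K ga by simp_all
  show "\<exists>\<gamma>K. coloring r EK \<gamma>K \<and> Ffree F VK EK \<gamma>K \<and>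
                     (\<forall>e\<in>dom \<xi>. \<xi> e = Some (\<gamma>K (g ` e))) \<and>
                     (\<forall>f\<in>EH. \<gamma>K (h ` f) = \<gamma>H f)" unfolding VK EK by (rule X)
qed



definition pdet :: "nat \<Rightarrow> ('a set \<times> 'a set set \<times> ('a set \<Rightarrow> nat)) set \<Rightarrow> nat \<Rightarrow> nat set \<Rightarrow> nat set set
    \<Rightarrow> (nat set \<rightharpoonup> nat) \<Rightarrow> nat set \<Rightarrow> bool" where
  "pdet r F i V E \<xi> e \<longleftrightarrow> graph V E \<and> pcoloring r E \<xi> \<and> e \<in> E \<and> e \<notin> dom \<xi> \<and>
     (\<forall>\<gamma>. extension r E \<xi> \<gamma> \<and> Ffree F V E \<gamma> \<longrightarrow> \<gamma> e = i) \<and> safe r F V E \<xi> [e]"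

definition xi1 :: "(nat \<Rightarrow> nat) \<Rightarrow> nat set set \<Rightarrow> (nat set \<rightharpoonup> nat) \<Rightarrow> nat set \<Rightarrow> nat set set
    \<Rightarrow> nat set \<Rightarrow> (nat set \<rightharpoonup> nat) \<Rightarrow> (nat set \<rightharpoonup> nat)" where
  "xi1 g E \<xi> f ED VD \<xi>D e' = (if e' \<in> E then (if e' = f then None else \<xi> e')
      else if e' \<in> (\<lambda>e. g ` e) ` ED then \<xi>D {x\<in>VD. g x \<in> e'} else None)"

lemma card2_inj:
  assumes "inj_on g A" "e \<subseteq> A" "card e = 2"
  shows "card (g ` e) = 2"
  using assms by (metis card_image inj_on_subset)

lemma step:
  fixes g :: "nat \<Rightarrow> nat"
  assumes G: "pdet r F i V E \<xi> e" and fc: "\<xi> f = Some c"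
    and D: "pdet r F c VD ED \<xi>D eD"
    and ginj: "inj_on g VD" and gV: "\<forall>x\<in>VD. g x \<in> V \<longleftrightarrow> x \<in> eD" and gf: "g ` eD = f"
  shows "pdet r F i (V \<union> g ` VD) (E \<union> (\<lambda>e. g ` e) ` ED) (xi1 g E \<xi> f ED VD \<xi>D) e \<and>
    dom (xi1 g E \<xi> f ED VD \<xi>D) = (dom \<xi> - {f}) \<union> (\<lambda>e. g ` e) ` dom \<xi>D"
proof -
  define V1 where "V1 = V \<union> g ` VD"
  define E1 where "E1 = E \<union> (\<lambda>e. g ` e) ` ED"
  define \<xi>1 where "\<xi>1 = xi1 g E \<xi> f ED VD \<xi>D"
  have grG: "graph V E" and pcG: "pcoloring r E \<xi>" and eE: "e \<in> E" and edom: "e \<notin> dom \<xi>"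
    and forceG: "\<forall>\<gamma>. extension r E \<xi> \<gamma> \<and> Ffree F V E \<gamma> \<longrightarrow> \<gamma> e = i"
    and safeG: "safe r F V E \<xi> [e]"
    using G unfolding pdet_def by blast+
  have grD: "graph VD ED" and pcD: "pcoloring r ED \<xi>D" and eDE: "eD \<in> ED" and eDdom: "eD \<notin> dom \<xi>D"
    and forceD: "\<forall>\<gamma>. extension r ED \<xi>D \<gamma> \<and> Ffree F VD ED \<gamma> \<longrightarrow> \<gamma> eD = c"
    and safeD: "safe r F VD ED \<xi>D [eD]"
    using D unfolding pdet_def by blast+
  have finV: "finite V" and Eok: "\<And>e'. e' \<in> E \<Longrightarrow> e' \<subseteq> V \<and> card e' = 2"
    using grG unfolding graph_def by auto
  have finVD: "finite VD" and EDok: "\<And>e'. e' \<in> ED \<Longrightarrow> e' \<subseteq> VD \<and> card e' = 2"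
    using grD unfolding graph_def by auto
  have domG: "dom \<xi> \<subseteq> E" and ranG: "ran \<xi> \<subseteq> {1..r}" using pcG unfolding pcoloring_def by auto
  have domD: "dom \<xi>D \<subseteq> ED" and ranD: "ran \<xi>D \<subseteq> {1..r}" using pcD unfolding pcoloring_def by auto
  have fE: "f \<in> E" using fc domG by blast
  have ef: "e \<noteq> f" using edom fc by auto
  have eDsub: "eD \<subseteq> VD" using EDok eDE by blast
  have new_notE: "g ` e'' \<notin> E" if "e'' \<in> ED" "e'' \<noteq> eD" for e''
  proof
    assume "g ` e'' \<in> E"
    then have "g ` e'' \<subseteq> V" using Eok by blast
    moreover have "e'' \<subseteq> VD" using EDok that(1) by blast
    ultimately have "e'' \<subseteq> eD" using gV by blast
    moreover have "card e'' = card eD" using EDok that(1) eDE by simp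
    moreover have "finite eD" using eDsub finVD finite_subset by blast
    ultimately have "e'' = eD" using card_subset_eq by blast
    then show False using that(2) by simp
  qed
  have pre: "{x\<in>VD. g x \<in> g ` e''} = e''" if "e'' \<subseteq> VD" for e''
  proof
    show "{x \<in> VD. g x \<in> g ` e''} \<subseteq> e''"
    proof
      fix x assume "x \<in> {x \<in> VD. g x \<in> g ` e''}"
      then obtain y where "x \<in> VD" "y \<in> e''" "g x = g y" by blast
      then have "x = y" using ginj that unfolding inj_on_def by blast
      then show "x \<in> e''" using \<open>y \<in> e''\<close> by simp
    qed
  qed (use that in blast)
  have x_old: "\<xi>1 e' = (if e' = f then None else \<xi> e')" if "e' \<in> E" for e'
    using that unfolding \<xi>1_def xi1_def by simp
  have x_new: "\<xi>1 (g ` e'') = \<xi>D e''" if "e'' \<in> ED" "e'' \<noteq> eD" for e''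
  proof -
    have "g ` e'' \<notin> E" using new_notE that by blast
    moreover have "g ` e'' \<in> (\<lambda>e. g ` e) ` ED" using that(1) by blast
    ultimately have "\<xi>1 (g ` e'') = \<xi>D {x\<in>VD. g x \<in> g ` e''}" unfolding \<xi>1_def xi1_def by simp
    also have "\<dots> = \<xi>D e''" using pre EDok that(1) by simp
    finally show ?thesis .
  qed
  have dom1: "dom \<xi>1 = (dom \<xi> - {f}) \<union> (\<lambda>e. g ` e) ` dom \<xi>D"
  proof
    show "dom \<xi>1 \<subseteq> (dom \<xi> - {f}) \<union> (\<lambda>e. g ` e) ` dom \<xi>D"
    proof
      fix e' assume e': "e' \<in> dom \<xi>1"
      show "e' \<in> (dom \<xi> - {f}) \<union> (\<lambda>e. g ` e) ` dom \<xi>D"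
      proof (cases "e' \<in> E")
        case True
        then show ?thesis using e' x_old[OF True] by (auto split: if_splits)
      next
        case False
        with e' have "e' \<in> (\<lambda>e. g ` e) ` ED" unfolding \<xi>1_def xi1_def by (auto split: if_splits)
        then obtain e'' where e'': "e'' \<in> ED" "e' = g ` e''" by blast
        have "e'' \<noteq> eD" using False e'' gf fE by auto
        then have "\<xi>1 e' = \<xi>D e''" using x_new e'' by simp
        then have "e'' \<in> dom \<xi>D" using e' by (simp add: dom_def)
        then show ?thesis using e''(2) by blast
      qed
    qed
  next
    show "(dom \<xi> - {f}) \<union> (\<lambda>e. g ` e) ` dom \<xi>D \<subseteq> dom \<xi>1"
    proof
      fix e' assume "e' \<in> (dom \<xi> - {f}) \<union> (\<lambda>e. g ` e) ` dom \<xi>D"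
      then show "e' \<in> dom \<xi>1"
      proof
        assume a: "e' \<in> dom \<xi> - {f}"
        then have "e' \<in> E" "e' \<noteq> f" using domG by auto
        then have "\<xi>1 e' = \<xi> e'" using x_old by simp
        then show ?thesis using a by (simp add: dom_def)
      next
        assume "e' \<in> (\<lambda>e. g ` e) ` dom \<xi>D"
        then obtain e'' where e'': "e'' \<in> dom \<xi>D" "e' = g ` e''" by blast
        then have "e'' \<in> ED" "e'' \<noteq> eD" using domD eDdom by auto
        then have "\<xi>1 e' = \<xi>D e''" using x_new e'' by simp
        then show ?thesis using e''(1) by (simp add: dom_def)
      qed
    qed
  qed
  have x1_some: "\<xi>1 e' = Some y \<Longrightarrow> (\<exists>e''\<in>dom \<xi>D. e' = g ` e'' \<and> \<xi>D e'' = Some y) \<or> (e' \<in> dom \<xi> \<and> e' \<noteq> f \<and> \<xi> e' = Some y)" for e' y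
  proof -
    assume a: "\<xi>1 e' = Some y"
    then have "e' \<in> dom \<xi>1" by blast
    then have "e' \<in> (dom \<xi> - {f}) \<or> e' \<in> (\<lambda>e. g ` e) ` dom \<xi>D" using dom1 by blast
    then show ?thesis
    proof
      assume b: "e' \<in> dom \<xi> - {f}"
      then have "e' \<in> E" "e' \<noteq> f" using domG by auto
      then have "\<xi>1 e' = \<xi> e'" using x_old by simp
      then show ?thesis using a b by simp
    next
      assume "e' \<in> (\<lambda>e. g ` e) ` dom \<xi>D"
      then obtain e'' where e'': "e'' \<in> dom \<xi>D" "e' = g ` e''" by blast
      then have "e'' \<in> ED" "e'' \<noteq> eD" using domD eDdom by auto
      then have "\<xi>1 e' = \<xi>D e''" using x_new e'' by simp
      then show ?thesis using e'' a by auto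
    qed
  qed
  have gr1: "graph V1 E1"
    unfolding graph_def
  proof (intro conjI)
    show "finite V1" unfolding V1_def using finV finVD by simp
    show "\<forall>e'\<in>E1. e' \<subseteq> V1 \<and> card e' = 2"
    proof
    fix e' assume "e' \<in> E1"
    then show "e' \<subseteq> V1 \<and> card e' = 2"
    proof (unfold E1_def, elim UnE)
      assume "e' \<in> E" then show ?thesis using Eok unfolding V1_def by blast
    next
      assume "e' \<in> (\<lambda>e. g ` e) ` ED"
      then obtain e'' where e'': "e'' \<in> ED" "e' = g ` e''" by blast
      then show ?thesis using EDok[OF e''(1)] card2_inj[OF ginj] unfolding V1_def by blast
    qed
    qed
  qed
  have pc1: "pcoloring r E1 \<xi>1"
    unfolding pcoloring_def
  proof
    show "dom \<xi>1 \<subseteq> E1" unfolding dom1 E1_def using domG domD by blast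
    show "ran \<xi>1 \<subseteq> {1..r}"
    proof
      fix y assume "y \<in> ran \<xi>1"
      then obtain e' where "\<xi>1 e' = Some y" unfolding ran_def by blast
      then have "y \<in> ran \<xi>D \<or> y \<in> ran \<xi>" using x1_some unfolding ran_def by blast
      then show "y \<in> {1..r}" using ranG ranD by blast
    qed
  qed
  have restrict: "extension r E \<xi> \<gamma> \<and> Ffree F V E \<gamma>"
    if ext: "extension r E1 \<xi>1 \<gamma>" and ff: "Ffree F V1 E1 \<gamma>" for \<gamma>
  proof
    show ffG: "Ffree F V E \<gamma>" by (rule Ffree_sub[OF ff]) (auto simp: V1_def E1_def)
    have col1: "coloring r E1 \<gamma>" and ag1: "\<forall>e'\<in>dom \<xi>1. \<xi>1 e' = Some (\<gamma> e')"
      using ext unfolding extension_def by auto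
    define \<gamma>D where "\<gamma>D = (\<lambda>e''. \<gamma> (g ` e''))"
    have "extension r ED \<xi>D \<gamma>D"
      unfolding extension_def
    proof
      show "coloring r ED \<gamma>D" using col1 unfolding coloring_def \<gamma>D_def E1_def by auto
      show "\<forall>e\<in>dom \<xi>D. \<xi>D e = Some (\<gamma>D e)"
      proof
        fix e'' assume e'': "e'' \<in> dom \<xi>D"
        then have "e'' \<in> ED" "e'' \<noteq> eD" using domD eDdom by auto
        then have "\<xi>D e'' = \<xi>1 (g ` e'')" using x_new by simp
        moreover have "g ` e'' \<in> dom \<xi>1" unfolding dom1 using e'' by blast
        ultimately show "\<xi>D e'' = Some (\<gamma>D e'')" using ag1 unfolding \<gamma>D_def by simp
      qed
    qed
    moreover have "Ffree F VD ED \<gamma>D"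
      unfolding \<gamma>D_def by (rule Ffree_img[OF ff]) (auto simp: V1_def E1_def)
    ultimately have "\<gamma>D eD = c" using forceD[rule_format, OF conjI] by blast
    then have gfc: "\<gamma> f = c" unfolding \<gamma>D_def gf .
    show "extension r E \<xi> \<gamma>"
      unfolding extension_def
    proof
      show "coloring r E \<gamma>" using col1 unfolding coloring_def E1_def by auto
      show "\<forall>e\<in>dom \<xi>. \<xi> e = Some (\<gamma> e)"
      proof
        fix e' assume e': "e' \<in> dom \<xi>"
        show "\<xi> e' = Some (\<gamma> e')"
        proof (cases "e' = f")
          case True then show ?thesis using fc gfc by simp
        next
          case False
          have "e' \<in> E" using e' domG by blast
          then have "\<xi>1 e' = \<xi> e'" using x_old False by simp
          moreover have "e' \<in> dom \<xi>1" unfolding dom1 using e' False by blast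
          ultimately show ?thesis using ag1 by simp
        qed
      qed
    qed
  qed
  have ext1_of: "extension r E1 \<xi>1 \<gamma>K"
    if col: "coloring r E1 \<gamma>K" and onG: "\<forall>e'\<in>dom \<xi> - {f}. \<xi> e' = Some (\<gamma>K e')"
      and onD: "\<forall>e''\<in>dom \<xi>D. \<xi>D e'' = Some (\<gamma>K (g ` e''))" for \<gamma>K
    unfolding extension_def
  proof (intro conjI col ballI)
    fix e' assume "e' \<in> dom \<xi>1"
    then have "e' \<in> dom \<xi> - {f} \<or> e' \<in> (\<lambda>e. g ` e) ` dom \<xi>D" using dom1 by blast
    then show "\<xi>1 e' = Some (\<gamma>K e')"
    proof
      assume a: "e' \<in> dom \<xi> - {f}"
      then have "e' \<in> E" "e' \<noteq> f" using domG by auto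
      then have "\<xi>1 e' = \<xi> e'" using x_old by simp
      then show ?thesis using onG a by simp
    next
      assume "e' \<in> (\<lambda>e. g ` e) ` dom \<xi>D"
      then obtain e'' where e'': "e'' \<in> dom \<xi>D" "e' = g ` e''" by blast
      then have "e'' \<in> ED" "e'' \<noteq> eD" using domD eDdom by auto
      then have "\<xi>1 e' = \<xi>D e''" using x_new e'' by simp
      then show ?thesis using onD e'' by simp
    qed
  qed
  have gVD: "g ` VD \<inter> V = g ` eD" using gV eDsub by blast
  have extend: "\<exists>\<gamma>K. extension r E1 \<xi>1 \<gamma>K \<and> Ffree F V1 E1 \<gamma>K"
    if ext: "extension r E \<xi> \<gamma>" and ff: "Ffree F V E \<gamma>" for \<gamma>
  proof -
    obtain \<gamma>D where gD: "extension r ED \<xi>D \<gamma>D" "Ffree F VD ED \<gamma>D"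
      using safeD[unfolded safe1_iff, THEN conjunct2, THEN conjunct2, THEN conjunct1] by blast
    have "\<gamma>D eD = c" using forceD[rule_format, OF conjI, OF gD] .
    moreover have "\<gamma> f = c" using ext fc fE unfolding extension_def by force
    ultimately have eq: "\<gamma>D eD = \<gamma> f" by simp
    have colG: "coloring r E \<gamma>" using ext unfolding extension_def by blast
    have c1: "g ` VD \<inter> id ` V = g ` eD" using gVD by simp
    have c2: "g ` eD = id ` f" using gf by simp
    obtain \<gamma>K where K: "coloring r ((\<lambda>e. g ` e) ` ED \<union> (\<lambda>f. id ` f) ` E) \<gamma>K"
      "Ffree F (g ` VD \<union> id ` V) ((\<lambda>e. g ` e) ` ED \<union> (\<lambda>f. id ` f) ` E) \<gamma>K"
      "\<forall>e\<in>dom \<xi>D. \<xi>D e = Some (\<gamma>K (g ` e))" "\<forall>f\<in>E. \<gamma>K (id ` f) = \<gamma> f"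
      using safe1D[OF safeD grG colG ff fE gD eq ginj inj_on_id c1 c2] by blast
    have s1: "(\<lambda>e. g ` e) ` ED \<union> (\<lambda>f. id ` f) ` E = E1" unfolding E1_def by (simp add: Un_commute)
    have s2: "g ` VD \<union> id ` V = V1" unfolding V1_def by (simp add: Un_commute)
    have "extension r E1 \<xi>1 \<gamma>K"
    proof (rule ext1_of)
      show "coloring r E1 \<gamma>K" using K(1) s1 by simp
      show "\<forall>e'\<in>dom \<xi> - {f}. \<xi> e' = Some (\<gamma>K e')"
      proof
        fix e' assume a: "e' \<in> dom \<xi> - {f}"
        then have "e' \<in> E" using domG by blast
        then have "\<gamma>K e' = \<gamma> e'" using K(4) by simp
        moreover have "\<xi> e' = Some (\<gamma> e')" using ext a unfolding extension_def by blast
        ultimately show "\<xi> e' = Some (\<gamma>K e')" by simp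
      qed
      show "\<forall>e''\<in>dom \<xi>D. \<xi>D e'' = Some (\<gamma>K (g ` e''))" using K(3) .
    qed
    moreover have "Ffree F V1 E1 \<gamma>K" using K(2) s1 s2 by simp
    ultimately show ?thesis by blast
  qed
  have e1: "e \<in> E1" using eE unfolding E1_def by blast
  have edom1: "e \<notin> dom \<xi>1"
  proof
    assume "e \<in> dom \<xi>1"
    then have "e \<in> (\<lambda>e. g ` e) ` dom \<xi>D" using dom1 edom by auto
    then obtain e'' where e'': "e'' \<in> dom \<xi>D" "e = g ` e''" by blast
    then have "e'' \<in> ED" "e'' \<noteq> eD" using domD eDdom by auto
    then show False using new_notE e'' eE by blast
  qed
  have force1: "\<forall>\<gamma>. extension r E1 \<xi>1 \<gamma> \<and> Ffree F V1 E1 \<gamma> \<longrightarrow> \<gamma> e = i"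
    using restrict forceG by blast
  have safe1: "safe r F V1 E1 \<xi>1 [e]"
  proof (rule safe1I[OF e1 edom1])
    obtain \<gamma> where "extension r E \<xi> \<gamma>" "Ffree F V E \<gamma>" using safeG[unfolded safe1_iff, THEN conjunct2, THEN conjunct2, THEN conjunct1] by blast
    then show "\<exists>\<gamma>. extension r E1 \<xi>1 \<gamma> \<and> Ffree F V1 E1 \<gamma>" using extend by blast
  next
    fix VH :: "nat set" and EH \<gamma>H fH \<gamma> and g1 h1 :: "nat \<Rightarrow> nat"
    assume grH: "graph VH EH" and colH: "coloring r EH \<gamma>H" and ffH: "Ffree F VH EH \<gamma>H"
      and fHE: "fH \<in> EH" and ext: "extension r E1 \<xi>1 \<gamma>" and ff: "Ffree F V1 E1 \<gamma>"
      and eq: "\<gamma> e = \<gamma>H fH" and g1inj: "inj_on g1 V1" and h1inj: "inj_on h1 VH"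
      and cap: "g1 ` V1 \<inter> h1 ` VH = g1 ` e" and glue: "g1 ` e = h1 ` fH"
    have extG: "extension r E \<xi> \<gamma>" and ffG: "Ffree F V E \<gamma>" using restrict[OF ext ff] by auto
    have g1injV: "inj_on g1 V" using g1inj inj_on_subset unfolding V1_def by blast
    have eV: "e \<subseteq> V" using Eok eE by blast
    have fHV: "fH \<subseteq> VH" using grH fHE unfolding graph_def by blast
    have capG: "g1 ` V \<inter> h1 ` VH = g1 ` e"
    proof
      show "g1 ` V \<inter> h1 ` VH \<subseteq> g1 ` e" using cap unfolding V1_def by blast
      show "g1 ` e \<subseteq> g1 ` V \<inter> h1 ` VH" using eV glue fHV by blast
    qed
    obtain \<gamma>0 where G0: "coloring r ((\<lambda>e. g1 ` e) ` E \<union> (\<lambda>f. h1 ` f) ` EH) \<gamma>0"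
      "Ffree F (g1 ` V \<union> h1 ` VH) ((\<lambda>e. g1 ` e) ` E \<union> (\<lambda>f. h1 ` f) ` EH) \<gamma>0"
      "\<forall>e\<in>dom \<xi>. \<xi> e = Some (\<gamma>0 (g1 ` e))" "\<forall>f\<in>EH. \<gamma>0 (h1 ` f) = \<gamma>H f"
      using safe1D[OF safeG grH colH ffH fHE extG ffG eq g1injV h1inj capG glue] by blast
    define K0 where "K0 = g1 ` V \<union> h1 ` VH"
    define E0 where "E0 = (\<lambda>e. g1 ` e) ` E \<union> (\<lambda>f. h1 ` f) ` EH"
    have grK0: "graph K0 E0"
      unfolding graph_def
    proof (intro conjI)
      show "finite K0" unfolding K0_def using finV grH unfolding graph_def by simp
      show "\<forall>e'\<in>E0. e' \<subseteq> K0 \<and> card e' = 2"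
      proof
      fix e' assume "e' \<in> E0"
      then show "e' \<subseteq> K0 \<and> card e' = 2"
      proof (unfold E0_def, elim UnE)
        assume "e' \<in> (\<lambda>e. g1 ` e) ` E"
        then obtain e'' where e'': "e'' \<in> E" "e' = g1 ` e''" by blast
        then show ?thesis using Eok[OF e''(1)] card2_inj[OF g1injV] unfolding K0_def by blast
      next
        assume "e' \<in> (\<lambda>e. h1 ` e) ` EH"
        then obtain e'' where e'': "e'' \<in> EH" "e' = h1 ` e''" by blast
        moreover have "e'' \<subseteq> VH \<and> card e'' = 2" using grH e''(1) unfolding graph_def by blast
        ultimately show ?thesis using card2_inj[OF h1inj] unfolding K0_def by blast
      qed
    qed
    qed
    obtain \<gamma>D where gD: "extension r ED \<xi>D \<gamma>D" "Ffree F VD ED \<gamma>D"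
      using safeD[unfolded safe1_iff, THEN conjunct2, THEN conjunct2, THEN conjunct1] by blast
    have "\<gamma>D eD = c" using forceD[rule_format, OF conjI, OF gD] .
    moreover have "\<gamma>0 (g1 ` f) = c" using G0(3) fc by (metis domI option.inject)
    ultimately have eqD: "\<gamma>D eD = \<gamma>0 (g1 ` f)" by simp
    have g1f: "g1 ` f \<in> E0" unfolding E0_def using fE by blast
    have gginj: "inj_on (g1 \<circ> g) VD"
      using comp_inj_on[OF ginj] g1inj inj_on_subset unfolding V1_def by blast
    have capD: "(g1 \<circ> g) ` VD \<inter> id ` K0 = (g1 \<circ> g) ` eD"
    proof
      show "(g1 \<circ> g) ` VD \<inter> id ` K0 \<subseteq> (g1 \<circ> g) ` eD"
      proof
        fix z assume z: "z \<in> (g1 \<circ> g) ` VD \<inter> id ` K0"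
        then obtain x where x: "x \<in> VD" "z = g1 (g x)" by auto
        have "z \<in> g1 ` V"
        proof -
          have "z \<in> g1 ` V \<or> z \<in> h1 ` VH" using z unfolding K0_def by auto
          moreover have "z \<in> h1 ` VH \<Longrightarrow> z \<in> g1 ` V"
          proof -
            assume "z \<in> h1 ` VH"
            moreover have "z \<in> g1 ` V1" using x unfolding V1_def by blast
            ultimately have "z \<in> g1 ` e" using cap by blast
            then show "z \<in> g1 ` V" using eV by blast
          qed
          ultimately show ?thesis by blast
        qed
        then obtain y where y: "y \<in> V" "z = g1 y" by blast
        have "g x \<in> V1" "y \<in> V1" using x y unfolding V1_def by auto
        then have "g x = y" using g1inj x y unfolding inj_on_def by metis
        then have "x \<in> eD" using gV x y by blast
        then show "z \<in> (g1 \<circ> g) ` eD" using x by auto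
      qed
    next
      show "(g1 \<circ> g) ` eD \<subseteq> (g1 \<circ> g) ` VD \<inter> id ` K0"
      proof
        fix z assume "z \<in> (g1 \<circ> g) ` eD"
        then obtain x where x: "x \<in> eD" "z = g1 (g x)" by auto
        have "g x \<in> f" using x gf by blast
        then have "g x \<in> V" using fE Eok by blast
        then have "z \<in> K0" unfolding K0_def using x by blast
        moreover have "z \<in> (g1 \<circ> g) ` VD" using x eDsub by auto
        ultimately show "z \<in> (g1 \<circ> g) ` VD \<inter> id ` K0" by simp
      qed
    qed
    have glueD: "(g1 \<circ> g) ` eD = id ` (g1 ` f)" using gf by (metis image_comp id_apply image_id)
    obtain \<gamma>K where K: "coloring r ((\<lambda>e. (g1 \<circ> g) ` e) ` ED \<union> (\<lambda>f. id ` f) ` E0) \<gamma>K"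
      "Ffree F ((g1 \<circ> g) ` VD \<union> id ` K0) ((\<lambda>e. (g1 \<circ> g) ` e) ` ED \<union> (\<lambda>f. id ` f) ` E0) \<gamma>K"
      "\<forall>e\<in>dom \<xi>D. \<xi>D e = Some (\<gamma>K ((g1 \<circ> g) ` e))" "\<forall>f\<in>E0. \<gamma>K (id ` f) = \<gamma>0 f"
      using safe1D[OF safeD grK0 G0(1)[folded E0_def] G0(2)[folded K0_def E0_def] g1f gD eqD gginj inj_on_id capD glueD]
      by blast
    have S1: "(g1 \<circ> g) ` VD \<union> id ` K0 = g1 ` V1 \<union> h1 ` VH"
      unfolding K0_def V1_def by (auto simp: image_Un image_comp)
    have S2: "(\<lambda>e. (g1 \<circ> g) ` e) ` ED \<union> (\<lambda>f. id ` f) ` E0 = (\<lambda>e. g1 ` e) ` E1 \<union> (\<lambda>f. h1 ` f) ` EH"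
      unfolding E0_def E1_def by (auto simp: image_Un image_image image_comp)
    have K4: "\<gamma>K f' = \<gamma>0 f'" if "f' \<in> E0" for f'
      using K(4) that by simp
    show "\<exists>\<gamma>K. coloring r ((\<lambda>e. g1 ` e) ` E1 \<union> (\<lambda>f. h1 ` f) ` EH) \<gamma>K \<and>
         Ffree F (g1 ` V1 \<union> h1 ` VH) ((\<lambda>e. g1 ` e) ` E1 \<union> (\<lambda>f. h1 ` f) ` EH) \<gamma>K \<and>
         (\<forall>e\<in>dom \<xi>1. \<xi>1 e = Some (\<gamma>K (g1 ` e))) \<and> (\<forall>f\<in>EH. \<gamma>K (h1 ` f) = \<gamma>H f)"
    proof (intro exI conjI ballI)
      show "coloring r ((\<lambda>e. g1 ` e) ` E1 \<union> (\<lambda>f. h1 ` f) ` EH) \<gamma>K" using K(1) S2 by simp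
      show "Ffree F (g1 ` V1 \<union> h1 ` VH) ((\<lambda>e. g1 ` e) ` E1 \<union> (\<lambda>f. h1 ` f) ` EH) \<gamma>K"
        using K(2) S1 S2 by simp
    next
      fix f' assume "f' \<in> EH"
      then show "\<gamma>K (h1 ` f') = \<gamma>H f'" using K4 G0(4) unfolding E0_def by auto
    next
      fix e' assume "e' \<in> dom \<xi>1"
      then have "e' \<in> dom \<xi> - {f} \<or> e' \<in> (\<lambda>e. g ` e) ` dom \<xi>D" using dom1 by blast
      then show "\<xi>1 e' = Some (\<gamma>K (g1 ` e'))"
      proof
        assume a: "e' \<in> dom \<xi> - {f}"
        then have "e' \<in> E" using domG by blast
        then have "\<xi>1 e' = \<xi> e'" "g1 ` e' \<in> E0" using x_old a unfolding E0_def by auto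
        then show ?thesis using G0(3) a K4 by auto
      next
        assume "e' \<in> (\<lambda>e. g ` e) ` dom \<xi>D"
        then obtain e'' where e'': "e'' \<in> dom \<xi>D" "e' = g ` e''" by blast
        then have "e'' \<in> ED" "e'' \<noteq> eD" using domD eDdom by auto
        then have "\<xi>1 e' = \<xi>D e''" using x_new e'' by simp
        then show ?thesis using K(3) e'' by (simp add: image_comp)
      qed
    qed
  qed
  have P: "pdet r F i V1 E1 \<xi>1 e" unfolding pdet_def using gr1 pc1 e1 edom1 force1 safe1 by blast
  show ?thesis using P dom1 unfolding V1_def E1_def \<xi>1_def by (rule conjI)
qed



definition gm :: "nat \<Rightarrow> nat \<Rightarrow> nat \<Rightarrow> nat \<Rightarrow> nat \<Rightarrow> nat \<Rightarrow> nat" where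
  "gm N p q a b x = (if x = p then a else if x = q then b else N + x)"

lemma gm_inj:
  assumes "a < N" "b < N" "a \<noteq> b"
  shows "inj_on (gm N p q a b) A"
  unfolding inj_on_def gm_def using assms by auto

lemma gm_V:
  assumes "\<forall>x\<in>V. x < N" "a \<in> V" "b \<in> V"
  shows "\<forall>x\<in>VD. gm N p q a b x \<in> V \<longleftrightarrow> x \<in> {p, q}"
  unfolding gm_def using assms by force

lemma gm_e: "p \<noteq> q \<Longrightarrow> gm N p q a b ` {p, q} = {a, b}"
  unfolding gm_def by (simp add: insert_commute)

lemma iterate:
  assumes "finite S"
  shows "pdet r F i V E \<xi> e \<Longrightarrow> Q V E \<xi> S \<Longrightarrow>
    (\<And>V E \<xi> S f. pdet r F i V E \<xi> e \<Longrightarrow> Q V E \<xi> S \<Longrightarrow> f \<in> S \<Longrightarrow>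
       \<exists>V' E' \<xi>'. pdet r F i V' E' \<xi>' e \<and> Q V' E' \<xi>' (S - {f})) \<Longrightarrow>
    \<exists>V' E' \<xi>'. pdet r F i V' E' \<xi>' e \<and> Q V' E' \<xi>' {}"
  using assms
proof (induction S arbitrary: V E \<xi> rule: finite_induct)
  case empty
  then show ?case by blast
next
  case (insert f S)
  obtain V' E' \<xi>' where "pdet r F i V' E' \<xi>' e" "Q V' E' \<xi>' (insert f S - {f})"
    using insert.prems(3)[OF insert.prems(1,2)] by blast
  moreover have "insert f S - {f} = S" using insert.hyps(2) by blast
  ultimately show ?case using insert.IH insert.prems(3) by metis
qed

lemma finite_E: "graph V E \<Longrightarrow> finite E"
  unfolding graph_def by (metis Pow_iff finite_Pow_iff rev_finite_subset subsetI)

lemma edge2: "graph V E \<Longrightarrow> f \<in> E \<Longrightarrow> \<exists>a b. f = {a, b} \<and> a \<noteq> b \<and> a \<in> V \<and> b \<in> V"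
  unfolding graph_def by (metis card_2_iff insert_subset)

lemma maxN: "finite V \<Longrightarrow> \<forall>x\<in>V. x < Suc (Max V)"
  by (simp add: le_imp_less_Suc Max_ge)



lemma det_pdet: "determiner r F V E \<xi> e i \<Longrightarrow> safe r F V E \<xi> [e] \<Longrightarrow> pdet r F i V E \<xi> e"
  unfolding determiner_def pdet_def by blast

lemma det_free: "determiner r F V E \<xi> e i \<Longrightarrow> \<exists>x\<in>e. \<forall>e'\<in>dom \<xi>. x \<notin> e'"
  unfolding determiner_def by (elim conjE)

lemma pdet_graph: "pdet r F i V E \<xi> e \<Longrightarrow> graph V E"
  unfolding pdet_def by blast
lemma pdet_dom: "pdet r F i V E \<xi> e \<Longrightarrow> dom \<xi> \<subseteq> E"
  unfolding pdet_def pcoloring_def by blast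
lemma pdet_ran: "pdet r F i V E \<xi> e \<Longrightarrow> ran \<xi> \<subseteq> {1..r}"
  unfolding pdet_def pcoloring_def by blast
lemma pdet_e: "pdet r F i V E \<xi> e \<Longrightarrow> e \<in> E \<and> e \<notin> dom \<xi>"
  unfolding pdet_def by blast

lemma other_end: "graph V E \<Longrightarrow> e \<in> E \<Longrightarrow> p \<in> e \<Longrightarrow> \<exists>q. e = {p, q} \<and> p \<noteq> q"
proof -
  assume a: "graph V E" "e \<in> E" "p \<in> e"
  then obtain x y where xy: "e = {x, y}" "x \<noteq> y" using edge2 by blast
  show ?thesis
  proof (cases "p = x")
    case True then show ?thesis using xy by blast
  next
    case False then have "p = y" using xy a(3) by blast
    then show ?thesis using xy by (metis insert_commute)
  qed
qed

lemma orient: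
  assumes "graph V E" "f \<in> E" "e \<in> E" "f \<noteq> e"
  shows "\<exists>a b. f = {a, b} \<and> a \<noteq> b \<and> a \<in> V \<and> b \<in> V \<and> b \<notin> e"
proof -
  obtain a0 b0 where ab: "f = {a0, b0}" "a0 \<noteq> b0" "a0 \<in> V" "b0 \<in> V" using edge2 assms(1,2) by blast
  show ?thesis
  proof (cases "b0 \<in> e")
    case False then show ?thesis using ab by blast
  next
    case True
    show ?thesis
    proof (cases "a0 \<in> e")
      case False then show ?thesis using ab by (metis insert_commute)
    next
      case True
      then have "f \<subseteq> e" using ab \<open>b0 \<in> e\<close> by blast
      moreover have "card f = 2" "card e = 2" "finite e" using assms(1,2,3) unfolding graph_def
        by (auto simp: card_ge_0_finite)
      ultimately have "f = e" using card_subset_eq by metis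
      then show ?thesis using assms(4) by blast
    qed
  qed
qed

lemma base_one:
  assumes raw: "\<forall>c\<in>{1..r}. \<exists>(VD::nat set) ED \<xi>D eD. determiner r F VD ED \<xi>D eD c \<and> safe r F VD ED \<xi>D [eD]"
    and i: "i \<in> {1..r}"
  shows "\<exists>V E \<xi> e. pdet r F i V E \<xi> e \<and> (\<forall>e'\<in>dom \<xi>. e' \<inter> e = {})"
proof -
  obtain V0 E0 \<xi>0 e0 where d0: "determiner r F V0 E0 \<xi>0 e0 i" "safe r F V0 E0 \<xi>0 [e0]"
    using raw i by blast
  have p0: "pdet r F i V0 E0 \<xi>0 e0" using det_pdet[OF d0] .
  define Q where "Q = (\<lambda>(V::nat set) (E::nat set set) (\<xi>::nat set \<rightharpoonup> nat) S. \<forall>e'\<in>dom \<xi>. e' \<inter> e0 \<noteq> {} \<longrightarrow> e' \<in> S)"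
  have finS: "finite (dom \<xi>0)"
    using pdet_dom[OF p0] finite_E[OF pdet_graph[OF p0]] finite_subset by blast
  have Q0: "Q V0 E0 \<xi>0 (dom \<xi>0)" unfolding Q_def by blast
  have stepQ: "\<exists>V' E' \<xi>'. pdet r F i V' E' \<xi>' e0 \<and> Q V' E' \<xi>' (S - {f})"
    if P: "pdet r F i V E \<xi> e0" and QS: "Q V E \<xi> S" and fS: "f \<in> S" for V E \<xi> S f
  proof (cases "f \<in> dom \<xi>")
    case False
    have "Q V E \<xi> (S - {f})" using QS False unfolding Q_def by blast
    then show ?thesis using P by blast
  next
    case True
    then obtain c where fc: "\<xi> f = Some c" by blast
    have c: "c \<in> {1..r}" using pdet_ran[OF P] fc by (auto simp: ran_def)
    obtain VD ED \<xi>D eD where dD: "determiner r F VD ED \<xi>D eD c" "safe r F VD ED \<xi>D [eD]"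
      using raw c by blast
    have pD: "pdet r F c VD ED \<xi>D eD" using det_pdet[OF dD] .
    obtain p where p: "p \<in> eD" "\<forall>e'\<in>dom \<xi>D. p \<notin> e'" using det_free[OF dD(1)] by blast
    obtain q where q: "eD = {p, q}" "p \<noteq> q"
      using other_end[OF pdet_graph[OF pD] conjunct1[OF pdet_e[OF pD]] p(1)] by blast
    have grG: "graph V E" using pdet_graph[OF P] .
    have fE: "f \<in> E" using pdet_dom[OF P] True by blast
    have e0E: "e0 \<in> E" and fe: "f \<noteq> e0" using pdet_e[OF P] True by auto
    obtain a b where ab: "f = {a, b}" "a \<noteq> b" "a \<in> V" "b \<in> V" "b \<notin> e0"
      using orient[OF grG fE e0E fe] by blast
    define N where "N = Suc (Max V)"
    have finV: "finite V" using grG unfolding graph_def by blast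
    have VN: "\<forall>x\<in>V. x < N" unfolding N_def using maxN[OF finV] .
    have ginj: "inj_on (gm N p q a b) VD" using gm_inj VN ab by blast
    have gV: "\<forall>x\<in>VD. gm N p q a b x \<in> V \<longleftrightarrow> x \<in> eD" using gm_V[OF VN ab(3,4)] q(1) by blast
    have gf: "gm N p q a b ` eD = f" using gm_e[OF q(2)] q(1) ab(1) by simp
    note R = step[OF P fc pD ginj gV gf]
    define V' where "V' = V \<union> gm N p q a b ` VD"
    define E' where "E' = E \<union> (\<lambda>e. gm N p q a b ` e) ` ED"
    define \<xi>' where "\<xi>' = xi1 (gm N p q a b) E \<xi> f ED VD \<xi>D"
    have P': "pdet r F i V' E' \<xi>' e0" unfolding V'_def E'_def \<xi>'_def by (rule conjunct1[OF R])
    have dom': "dom \<xi>' = (dom \<xi> - {f}) \<union> (\<lambda>e. gm N p q a b ` e) ` dom \<xi>D"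
      unfolding \<xi>'_def by (rule conjunct2[OF R])
    have e0V: "e0 \<subseteq> V" using grG e0E unfolding graph_def by blast
    have "Q V' E' \<xi>' (S - {f})"
      unfolding Q_def
    proof (intro ballI impI)
      fix e' assume e': "e' \<in> dom \<xi>'" and ne: "e' \<inter> e0 \<noteq> {}"
      from e' have "e' \<in> dom \<xi> - {f} \<or> e' \<in> (\<lambda>e. gm N p q a b ` e) ` dom \<xi>D" unfolding dom' by blast
      then show "e' \<in> S - {f}"
      proof
        assume "e' \<in> dom \<xi> - {f}"
        then show ?thesis using QS ne unfolding Q_def by blast
      next
        assume "e' \<in> (\<lambda>e. gm N p q a b ` e) ` dom \<xi>D"
        then obtain e'' where e'': "e'' \<in> dom \<xi>D" "e' = gm N p q a b ` e''" by blast
        from ne obtain z where z: "z \<in> e'" "z \<in> e0" by blast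
        then obtain x where x: "x \<in> e''" "z = gm N p q a b x" using e'' by blast
        have "x \<noteq> p" using p(2) e''(1) x(1) by blast
        show ?thesis
        proof (cases "x = q")
          case True
          then have "z = b" using x(2) \<open>x \<noteq> p\<close> unfolding gm_def by simp
          then show ?thesis using z ab(5) by blast
        next
          case False
          then have "z = N + x" using x(2) \<open>x \<noteq> p\<close> unfolding gm_def by simp
          moreover have "z < N" using VN z(2) e0V by blast
          ultimately show ?thesis by simp
        qed
      qed
    qed
    then show ?thesis using P' by blast
  qed
  have "\<exists>V' E' \<xi>'. pdet r F i V' E' \<xi>' e0 \<and> Q V' E' \<xi>' {}"
  proof (rule iterate[where Q=Q, OF finS p0 Q0])
    fix V E \<xi> S f assume "pdet r F i V E \<xi> e0" "Q V E \<xi> S" "f \<in> S"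
    then show "\<exists>V' E' \<xi>'. pdet r F i V' E' \<xi>' e0 \<and> Q V' E' \<xi>' (S - {f})" by (rule stepQ)
  qed
  then obtain V E \<xi> where res: "pdet r F i V E \<xi> e0" "Q V E \<xi> {}" by blast
  have "\<forall>e'\<in>dom \<xi>. e' \<inter> e0 = {}" using res(2) unfolding Q_def by blast
  then show ?thesis using res(1) by blast
qed



definition potdet :: "nat \<Rightarrow> ('a set \<times> 'a set set \<times> ('a set \<Rightarrow> nat)) set \<Rightarrow> nat \<Rightarrow> nat \<Rightarrow> nat set \<Rightarrow> nat set set
    \<Rightarrow> (nat set \<rightharpoonup> nat) \<Rightarrow> nat set \<Rightarrow> bool" where
  "potdet r F i d V E \<xi> e \<longleftrightarrow> pdet r F i V E \<xi> e \<and>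
     (\<exists>\<phi>. lip E \<phi> \<and> (\<forall>x\<in>e. \<phi> x = 0) \<and> (\<forall>e'\<in>dom \<xi>. \<forall>x\<in>e'. d \<le> \<phi> x))"

lemma base_pot:
  assumes raw: "\<forall>c\<in>{1..r}. \<exists>(VD::nat set) ED \<xi>D eD. determiner r F VD ED \<xi>D eD c \<and> safe r F VD ED \<xi>D [eD]"
    and i: "i \<in> {1..r}"
  shows "\<exists>V E \<xi> e. potdet r F i 1 V E \<xi> e"
proof -
  obtain V E \<xi> e where P: "pdet r F i V E \<xi> e" and dj: "\<forall>e'\<in>dom \<xi>. e' \<inter> e = {}"
    using base_one[OF raw i] by blast
  define \<phi> where "\<phi> = (\<lambda>x::nat. if x \<in> e then 0 else (1::nat))"
  have "lip E \<phi>" unfolding lip_def \<phi>_def by simp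
  moreover have "\<forall>x\<in>e. \<phi> x = 0" unfolding \<phi>_def by simp
  moreover have "\<forall>e'\<in>dom \<xi>. \<forall>x\<in>e'. 1 \<le> \<phi> x" unfolding \<phi>_def using dj by auto
  ultimately show ?thesis unfolding potdet_def using P by blast
qed

lemma gm_val:
  assumes "a < N" "b < N"
  shows "(if gm N p q a b z < N then \<phi> (gm N p q a b z) else m + \<psi> (gm N p q a b z - N)) =
    (if z = p then \<phi> a else if z = q then \<phi> b else m + \<psi> z)"
  using assms unfolding gm_def by auto

lemma pot_step:
  assumes ind: "\<forall>c\<in>{1..r}. \<exists>V E \<xi> e. potdet r F c d V E \<xi> e"
    and d1: "1 \<le> d" and i: "i \<in> {1..r}"
  shows "\<exists>V E \<xi> e. potdet r F i (2 * d) V E \<xi> e"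
proof -
  obtain V0 E0 \<xi>0 e0 where d0: "potdet r F i d V0 E0 \<xi>0 e0" using ind i by blast
  have p0: "pdet r F i V0 E0 \<xi>0 e0" using d0 unfolding potdet_def by (elim conjE)
  obtain \<phi>0 where phi0: "lip E0 \<phi>0" "\<forall>x\<in>e0. \<phi>0 x = 0" "\<forall>e'\<in>dom \<xi>0. \<forall>x\<in>e'. d \<le> \<phi>0 x"
    using d0 unfolding potdet_def by (elim conjE exE) blast
  define Q where "Q = (\<lambda>(V::nat set) (E::nat set set) (\<xi>::nat set \<rightharpoonup> nat) S. \<exists>\<phi>. lip E \<phi> \<and> (\<forall>x\<in>e0. \<phi> x = 0) \<and>
     (\<forall>e'\<in>dom \<xi>. \<forall>x\<in>e'. d \<le> \<phi> x) \<and> (\<forall>e'\<in>dom \<xi>. e' \<notin> S \<longrightarrow> (\<forall>x\<in>e'. 2 * d \<le> \<phi> x)))"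
  have finS: "finite (dom \<xi>0)"
    using pdet_dom[OF p0] finite_E[OF pdet_graph[OF p0]] finite_subset by blast
  have Q0: "Q V0 E0 \<xi>0 (dom \<xi>0)" unfolding Q_def using phi0 by blast
  have stepQ: "\<exists>V' E' \<xi>'. pdet r F i V' E' \<xi>' e0 \<and> Q V' E' \<xi>' (S - {f})"
    if P: "pdet r F i V E \<xi> e0" and QS: "Q V E \<xi> S" and fS: "f \<in> S" for V E \<xi> S f
  proof -
    obtain \<phi> where phi: "lip E \<phi>" "\<forall>x\<in>e0. \<phi> x = 0" "\<forall>e'\<in>dom \<xi>. \<forall>x\<in>e'. d \<le> \<phi> x"
      "\<forall>e'\<in>dom \<xi>. e' \<notin> S \<longrightarrow> (\<forall>x\<in>e'. 2 * d \<le> \<phi> x)"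
      using QS unfolding Q_def by blast
    show ?thesis
    proof (cases "f \<in> dom \<xi>")
      case False
      have "Q V E \<xi> (S - {f})" unfolding Q_def
      proof (intro exI conjI)
        show "lip E \<phi>" "\<forall>x\<in>e0. \<phi> x = 0" "\<forall>e'\<in>dom \<xi>. \<forall>x\<in>e'. d \<le> \<phi> x" using phi by blast+
        show "\<forall>e'\<in>dom \<xi>. e' \<notin> S - {f} \<longrightarrow> (\<forall>x\<in>e'. 2 * d \<le> \<phi> x)" using phi(4) False by blast
      qed
      then show ?thesis using P by blast
    next
      case True
      then obtain c where fc: "\<xi> f = Some c" by blast
      have c: "c \<in> {1..r}" using pdet_ran[OF P] fc by (auto simp: ran_def)
      obtain VD ED \<xi>D eD where dD: "potdet r F c d VD ED \<xi>D eD" using ind c by blast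
      have pD: "pdet r F c VD ED \<xi>D eD" using dD unfolding potdet_def by (elim conjE)
      obtain \<psi> where psi: "lip ED \<psi>" "\<forall>x\<in>eD. \<psi> x = 0" "\<forall>e'\<in>dom \<xi>D. \<forall>x\<in>e'. d \<le> \<psi> x"
        using dD unfolding potdet_def by (elim conjE exE) blast
      obtain p q where pq: "eD = {p, q}" "p \<noteq> q"
        using edge2[OF pdet_graph[OF pD] conjunct1[OF pdet_e[OF pD]]] by blast
      have grG: "graph V E" using pdet_graph[OF P] .
      have fE: "f \<in> E" using pdet_dom[OF P] True by blast
      have e0E: "e0 \<in> E" using pdet_e[OF P] by blast
      obtain a b where ab: "f = {a, b}" "a \<noteq> b" "a \<in> V" "b \<in> V"
        using edge2[OF grG fE] by blast
      define N where "N = Suc (Max V)"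
      have finV: "finite V" using grG unfolding graph_def by blast
      have VN: "\<forall>x\<in>V. x < N" unfolding N_def using maxN[OF finV] .
      have aN: "a < N" "b < N" using VN ab by auto
      have ginj: "inj_on (gm N p q a b) VD" using gm_inj VN ab by blast
      have gV: "\<forall>x\<in>VD. gm N p q a b x \<in> V \<longleftrightarrow> x \<in> eD" using gm_V[OF VN ab(3,4)] pq(1) by blast
      have gf: "gm N p q a b ` eD = f" using gm_e[OF pq(2)] pq(1) ab(1) by simp
      note R = step[OF P fc pD ginj gV gf]
      define V' where "V' = V \<union> gm N p q a b ` VD"
      define E' where "E' = E \<union> (\<lambda>e. gm N p q a b ` e) ` ED"
      define \<xi>' where "\<xi>' = xi1 (gm N p q a b) E \<xi> f ED VD \<xi>D"
      have P': "pdet r F i V' E' \<xi>' e0" unfolding V'_def E'_def \<xi>'_def by (rule conjunct1[OF R])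
      have dom': "dom \<xi>' = (dom \<xi> - {f}) \<union> (\<lambda>e. gm N p q a b ` e) ` dom \<xi>D"
        unfolding \<xi>'_def by (rule conjunct2[OF R])
      define m where "m = min (\<phi> a) (\<phi> b)"
      define \<phi>1 where "\<phi>1 = (\<lambda>x. if x < N then \<phi> x else m + \<psi> (x - N))"
      have val: "\<phi>1 (gm N p q a b z) = (if z = p then \<phi> a else if z = q then \<phi> b else m + \<psi> z)" for z
        unfolding \<phi>1_def using gm_val[OF aN] .
      have old: "\<phi>1 x = \<phi> x" if "x \<in> V" for x using VN that unfolding \<phi>1_def by simp
      have Eok: "e' \<subseteq> V" if "e' \<in> E" for e' using grG that unfolding graph_def by blast
      have EDok: "e' \<subseteq> VD" if "e' \<in> ED" for e' using pdet_graph[OF pD] that unfolding graph_def by blast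
      have psi_pq: "\<psi> p = 0" "\<psi> q = 0" using psi(2) pq(1) by auto
      have phi_ab: "\<phi> a \<le> \<phi> b + 1" "\<phi> b \<le> \<phi> a + 1"
        using lipD[OF phi(1) fE] ab(1) by auto
      have mab: "d \<le> m"
        using phi(3) True ab(1) unfolding m_def by auto
      have lip1: "lip E' \<phi>1"
        unfolding lip_def
      proof (intro ballI)
        fix e' u v assume e': "e' \<in> E'" and u: "u \<in> e'" and v: "v \<in> e'"
        show "\<phi>1 u \<le> \<phi>1 v + 1"
        proof (cases "e' \<in> E")
          case True
          then have "u \<in> V" "v \<in> V" using Eok u v by auto
          then show ?thesis using old lipD[OF phi(1) True u v] by simp
        next
          case False
          then obtain e'' where e'': "e'' \<in> ED" "e' = gm N p q a b ` e''" using e' unfolding E'_def by blast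
          obtain x y where xy: "x \<in> e''" "y \<in> e''" "u = gm N p q a b x" "v = gm N p q a b y"
            using u v e'' by blast
          have pxy: "\<psi> x \<le> \<psi> y + 1" "\<psi> y \<le> \<psi> x + 1" using lipD[OF psi(1) e''(1)] xy(1,2) by auto
          show ?thesis unfolding xy(3,4) val using pxy psi_pq phi_ab unfolding m_def by auto
        qed
      qed
      have "Q V' E' \<xi>' (S - {f})"
        unfolding Q_def
      proof (intro exI conjI)
        show "lip E' \<phi>1" by (rule lip1)
        show "\<forall>x\<in>e0. \<phi>1 x = 0" using phi(2) old Eok[OF e0E] by auto
        have bnd: "(\<forall>x\<in>e'. d \<le> \<phi>1 x) \<and> (e' \<notin> S - {f} \<longrightarrow> (\<forall>x\<in>e'. 2 * d \<le> \<phi>1 x))"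
          if e': "e' \<in> dom \<xi>'" for e'
        proof -
          from e' have "e' \<in> dom \<xi> - {f} \<or> e' \<in> (\<lambda>e. gm N p q a b ` e) ` dom \<xi>D" unfolding dom' by blast
          then show ?thesis
          proof
            assume a1: "e' \<in> dom \<xi> - {f}"
            then have "e' \<subseteq> V" using Eok pdet_dom[OF P] by blast
            then have eq: "\<forall>x\<in>e'. \<phi>1 x = \<phi> x" using old by blast
            show ?thesis using eq phi(3,4) a1 by auto
          next
            assume "e' \<in> (\<lambda>e. gm N p q a b ` e) ` dom \<xi>D"
            then obtain e'' where e'': "e'' \<in> dom \<xi>D" "e' = gm N p q a b ` e''" by blast
            have "2 * d \<le> \<phi>1 x" if x: "x \<in> e'" for x
            proof -
              obtain z where z: "z \<in> e''" "x = gm N p q a b z" using x e'' by blast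
              have dz: "d \<le> \<psi> z" using psi(3) e''(1) z(1) by blast
              then have "z \<noteq> p" "z \<noteq> q" using psi_pq d1 by auto
              then have "\<phi>1 x = m + \<psi> z" using val z(2) by simp
              then show ?thesis using dz mab by simp
            qed
            then show ?thesis using d1 by force
          qed
        qed
        show "\<forall>e'\<in>dom \<xi>'. \<forall>x\<in>e'. d \<le> \<phi>1 x" using bnd by blast
        show "\<forall>e'\<in>dom \<xi>'. e' \<notin> S - {f} \<longrightarrow> (\<forall>x\<in>e'. 2 * d \<le> \<phi>1 x)" using bnd by blast
      qed
      then show ?thesis using P' by blast
    qed
  qed
  have "\<exists>V' E' \<xi>'. pdet r F i V' E' \<xi>' e0 \<and> Q V' E' \<xi>' {}"
  proof (rule iterate[where Q=Q, OF finS p0 Q0])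
    fix V E \<xi> S f assume "pdet r F i V E \<xi> e0" "Q V E \<xi> S" "f \<in> S"
    then show "\<exists>V' E' \<xi>'. pdet r F i V' E' \<xi>' e0 \<and> Q V' E' \<xi>' (S - {f})" by (rule stepQ)
  qed
  then obtain V E \<xi> where res: "pdet r F i V E \<xi> e0" "Q V E \<xi> {}" by blast
  from res(2) obtain \<phi> where ph: "lip E \<phi>" "\<forall>x\<in>e0. \<phi> x = 0"
    "\<forall>e'\<in>dom \<xi>. e' \<notin> {} \<longrightarrow> (\<forall>x\<in>e'. 2 * d \<le> \<phi> x)"
    unfolding Q_def by (elim exE conjE) blast
  have "\<forall>e'\<in>dom \<xi>. \<forall>x\<in>e'. 2 * d \<le> \<phi> x" using ph(3) by simp
  then have "potdet r F i (2 * d) V E \<xi> e0" unfolding potdet_def using res(1) ph(1,2) by blast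
  then show ?thesis by blast
qed



lemma pot_all:
  assumes raw: "\<forall>c\<in>{1..r}. \<exists>(VD::nat set) ED \<xi>D eD. determiner r F VD ED \<xi>D eD c \<and> safe r F VD ED \<xi>D [eD]"
  shows "\<forall>i\<in>{1..r}. \<exists>V E \<xi> e. potdet r F i (2 ^ k) V E \<xi> e"
proof (induction k)
  case 0
  then show ?case using base_pot[OF raw] by simp
next
  case (Suc k)
  have "(1::nat) \<le> 2 ^ k" by simp
  then show ?case using pot_step[OF Suc.IH] by simp
qed

theorem lemma6:
  fixes \<F> :: "('a set \<times> 'a set set \<times> ('a set \<Rightarrow> nat)) set" and r :: nat
  assumes "finite \<F>"
    and "\<forall>(VF, EF, \<phi>)\<in>\<F>. graph VF EF \<and> coloring r EF \<phi>"
    and "\<forall>i\<in>{1..r}. \<exists>(V::nat set) E \<xi> e.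
           determiner r \<F> V E \<xi> e i \<and> safe r \<F> V E \<xi> [e]"
  shows "\<forall>(d::nat) i. i \<in> {1..r} \<longrightarrow> (\<exists>(V::nat set) E \<xi> e.
           determiner r \<F> V E \<xi> e i \<and> remote d E e (dom \<xi>) \<and> safe r \<F> V E \<xi> [e])"
proof (intro allI impI)
  fix d i assume i: "i \<in> {1..r}"
  obtain V E \<xi> e where pd: "potdet r \<F> i (2 ^ d) V E \<xi> e"
    using pot_all[OF assms(3), of d] i by blast
  have P: "pdet r \<F> i V E \<xi> e" using pd unfolding potdet_def by (elim conjE)
  obtain \<phi> where ph: "lip E \<phi>" "\<forall>x\<in>e. \<phi> x = 0" "\<forall>e'\<in>dom \<xi>. \<forall>x\<in>e'. 2 ^ d \<le> \<phi> x"
    using pd unfolding potdet_def by (elim conjE exE) blast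
  have dle: "d \<le> 2 ^ d" using less_exp[of d] by simp
  have one: "(1::nat) \<le> 2 ^ d" by simp
  have grG: "graph V E" and pc: "pcoloring r E \<xi>" and eE: "e \<in> E" and edom: "e \<notin> dom \<xi>"
    and force: "\<forall>\<gamma>. extension r E \<xi> \<gamma> \<and> Ffree \<F> V E \<gamma> \<longrightarrow> \<gamma> e = i"
    and sf: "safe r \<F> V E \<xi> [e]"
    using P unfolding pdet_def by blast+
  have ex: "\<exists>\<gamma>. extension r E \<xi> \<gamma> \<and> Ffree \<F> V E \<gamma>"
    using sf[unfolded safe1_iff, THEN conjunct2, THEN conjunct2, THEN conjunct1] .
  obtain a b where ab: "e = {a, b}" "a \<noteq> b" using edge2[OF grG eE] by blast
  have free: "\<exists>x\<in>e. \<forall>e'\<in>dom \<xi>. x \<notin> e'"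
  proof
    show "a \<in> e" using ab by simp
    show "\<forall>e'\<in>dom \<xi>. a \<notin> e'"
    proof (intro ballI notI)
      fix e' assume "e' \<in> dom \<xi>" "a \<in> e'"
      then have "2 ^ d \<le> \<phi> a" using ph(3) by blast
      moreover have "\<phi> a = 0" using ph(2) ab by simp
      ultimately show False using one by simp
    qed
  qed
  have det: "determiner r \<F> V E \<xi> e i"
    unfolding determiner_def using grG pc eE edom free ex force by blast
  have rem: "remote d E e (dom \<xi>)"
  proof (rule lip_remote[OF ph(1) ph(2)])
    show "\<forall>e'\<in>dom \<xi>. \<forall>x\<in>e'. d \<le> \<phi> x" using ph(3) dle order_trans by blast
  qed
  show "\<exists>(V::nat set) E \<xi> e. determiner r \<F> V E \<xi> e i \<and> remote d E e (dom \<xi>) \<and> safe r \<F> V E \<xi> [e]"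
    using det rem sf by blast
qed

end
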